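(* Let $f(t)=\sum_{n=1}^{\infty}t^{n}/n^{n}=t\int_0^1x^{-tx}\,dx$. Then $f(t)\to-1$ as $t\to-\infty$ along the real axis.
   Context: $x^{-tx}=\exp(-tx\ln x)$ for $x\in(0,1]$. *)

theory Defs
  imports "HOL-Analysis.Analysis"
begin

definition f_series :: "real \<Rightarrow> real" where
  "f_series t = (\<Sum>k. t ^ (Suc k) / (real (Suc k)) ^ (Suc k))"

end

theory Submission imports Defs "HOL-Real_Asymp.Real_Asymp" begin

lemma xlnx_bounds:
  fixes x :: real assumes "0 \<le> x" "x \<le> 1"
  shows "x - 1 \<le> x * ln x" "x * ln x \<le> 0"
proof -
  show "x * ln x \<le> 0"
    using assms by (cases "x = 0") (auto intro: mult_nonneg_nonpos)
  show "x - 1 \<le> x * ln x"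
  proof (cases "x = 0")
    case False
    then have xp: "x > 0" using assms by simp
    have "ln (1/x) \<le> 1/x - 1" using xp by (intro ln_le_minus_one) simp
    then have "- ln x \<le> 1/x - 1" using xp by (simp add: ln_div)
    then have "x * (- ln x) \<le> x * (1/x - 1)" using xp by (intro mult_left_mono) auto
    then show ?thesis using xp by (simp add: algebra_simps)
  qed simp
qed

lemma cont_xlnx: "continuous_on {0..1} (\<lambda>x::real. x * ln x)"
proof (clarsimp simp: continuous_on_eq_continuous_within)
  fix x :: real assume x: "0 \<le> x" "x \<le> 1"
  show "continuous (at x within {0..1}) (\<lambda>x. x * ln x)"
  proof (cases "x = 0")
    case True
    have "((\<lambda>x::real. x * ln x) \<longlongrightarrow> 0) (at_right 0)" by real_asymp
    then show ?thesis using True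
      by (simp add: at_within_Icc_at_right continuous_within)
  next
    case False
    then have "isCont (\<lambda>x. x * ln x) x" using x by (auto intro!: continuous_intros)
    then show ?thesis using continuous_at_imp_continuous_at_within by blast
  qed
qed

lemma cont_pow_ln:
  assumes "k \<le> m"
  shows "continuous_on {0..1} (\<lambda>x::real. x ^ m * ln x ^ k)"
proof -
  have eq: "x ^ m * ln x ^ k = (x * ln x) ^ k * x ^ (m - k)" for x :: real
  proof -
    have "x ^ m = x ^ k * x ^ (m - k)" using assms by (simp flip: power_add)
    then show ?thesis by (simp add: power_mult_distrib)
  qed
  show ?thesis unfolding eq
    by (intro continuous_intros cont_xlnx)
qed

lemma Kint:
  "k \<le> m \<Longrightarrow> ((\<lambda>x::real. x ^ m * ln x ^ k) has_integral ((-1) ^ k * fact k / real (Suc m) ^ Suc k)) {0..1}"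
proof (induction k)
  case 0
  have d: "((\<lambda>x. x^Suc m / real (Suc m)) has_real_derivative x^m) (at x)" for x :: real
    using DERIV_cdivide[OF DERIV_pow[of "Suc m" x], of "real (Suc m)"] by (simp del: of_nat_Suc)
  have "((\<lambda>x::real. x ^ m) has_integral ((\<lambda>x. x ^ Suc m / real (Suc m)) 1 - (\<lambda>x. x ^ Suc m / real (Suc m)) 0)) {0..1}"
  proof (intro fundamental_theorem_of_calculus_interior)
    show "continuous_on {0..1} (\<lambda>x::real. x ^ Suc m / real (Suc m))" by (intro continuous_intros) auto
    fix x :: real show "((\<lambda>x. x ^ Suc m / real (Suc m)) has_vector_derivative x ^ m) (at x)"
      using d has_real_derivative_iff_has_vector_derivative by blast
  qed simp
  then show ?case by simp
next
  case (Suc j)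
  then have IH: "((\<lambda>x::real. x ^ m * ln x ^ j) has_integral ((-1) ^ j * fact j / real (Suc m) ^ Suc j)) {0..1}"
    by simp
  let ?G = "\<lambda>x::real. x ^ Suc m * ln x ^ Suc j"
  have "((\<lambda>x. real (Suc m) * (x ^ m * ln x ^ Suc j) + real (Suc j) * (x ^ m * ln x ^ j)) has_integral (?G 1 - ?G 0)) {0..1}"
  proof (intro fundamental_theorem_of_calculus_interior)
    show "continuous_on {0..1} ?G" using Suc.prems by (intro cont_pow_ln) simp
    fix x :: real assume x: "x \<in> {0<..<1}"
    have "(?G has_real_derivative real (Suc m) * (x ^ m * ln x ^ Suc j) + real (Suc j) * (x ^ m * ln x ^ j)) (at x)"
    proof -
      have d1: "((\<lambda>x. x^Suc m) has_real_derivative real (Suc m) * x^m) (at x)"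
        using DERIV_pow[of "Suc m" x] by simp
      have d2: "((\<lambda>x. ln x ^ Suc j) has_real_derivative (1 + real j) * (inverse x * ln x ^ j)) (at x)"
        using x by (intro DERIV_power_Suc DERIV_ln) simp
      have e: "real (Suc m) * x ^ m * ln x ^ Suc j + (1 + real j) * (inverse x * ln x ^ j) * x ^ Suc m
         = real (Suc m) * (x ^ m * ln x ^ Suc j) + real (Suc j) * (x ^ m * ln x ^ j)"
        using x by (simp add: field_simps)
      show ?thesis using DERIV_mult[OF d1 d2] unfolding e .
    qed
    then show "(?G has_vector_derivative real (Suc m) * (x ^ m * ln x ^ Suc j) + real (Suc j) * (x ^ m * ln x ^ j)) (at x)"
      by (simp add: has_real_derivative_iff_has_vector_derivative)
  qed simp
  then have H: "((\<lambda>x. real (Suc m) * (x ^ m * ln x ^ Suc j) + real (Suc j) * (x ^ m * ln x ^ j)) has_integral 0) {0..1}"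
    by simp
  have "((\<lambda>x. (real (Suc m) * (x ^ m * ln x ^ Suc j) + real (Suc j) * (x ^ m * ln x ^ j)) - real (Suc j) * (x ^ m * ln x ^ j))
      has_integral (0 - real (Suc j) * ((-1) ^ j * fact j / real (Suc m) ^ Suc j))) {0..1}"
    by (intro has_integral_diff H has_integral_mult_right IH)
  then have "((\<lambda>x. real (Suc m) * (x ^ m * ln x ^ Suc j)) has_integral (0 - real (Suc j) * ((-1) ^ j * fact j / real (Suc m) ^ Suc j))) {0..1}"
    by (simp only: add_diff_cancel_right')
  then have "((\<lambda>x. (1 / real (Suc m)) * (real (Suc m) * (x ^ m * ln x ^ Suc j))) has_integral (1 / real (Suc m)) * (0 - real (Suc j) * ((-1) ^ j * fact j / real (Suc m) ^ Suc j))) {0..1}"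
    by (intro has_integral_mult_right)
  moreover have "(1 / real (Suc m)) * (0 - real (Suc j) * ((-1) ^ j * fact j / real (Suc m) ^ Suc j)) = (-1) ^ Suc j * fact (Suc j) / real (Suc m) ^ Suc (Suc j)"
    by (simp add: field_simps) (simp add: minus_divide_left)
  moreover have "(\<lambda>x. (1/real(Suc m)) * (real(Suc m) * (x^m * ln x ^ Suc j))) = (\<lambda>x::real. x^m * ln x ^ Suc j)"
    by (simp del: of_nat_Suc)
  ultimately show ?case by metis
qed


lemma series_rep:
  fixes s :: real
  shows "(\<lambda>n. (-s) ^ n / real (Suc n) ^ Suc n) sums integral {0..1} (\<lambda>x. exp (s * (x * ln x)))"
proof -
  define P where "P N x = (\<Sum>n<N. (s * (x * ln x)) ^ n / fact n)" for N x
  have term_int: "((\<lambda>x. (s * (x * ln x)) ^ n / fact n) has_integral (-s) ^ n / real (Suc n) ^ Suc n) {0..1}" for n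
  proof -
    have "((\<lambda>x. (s ^ n / fact n) * (x ^ n * ln x ^ n)) has_integral (s ^ n / fact n) * ((-1) ^ n * fact n / real (Suc n) ^ Suc n)) {0..1}"
      by (intro has_integral_mult_right Kint) simp
    moreover have "(s ^ n / fact n) * ((-1) ^ n * fact n / real (Suc n) ^ Suc n) = (-s) ^ n / real (Suc n) ^ Suc n"
      by (simp add: power_minus')
    moreover have "(\<lambda>x. (s ^ n / fact n) * (x ^ n * ln x ^ n)) = (\<lambda>x. (s * (x * ln x)) ^ n / fact n)"
      by (simp add: power_mult_distrib)
    ultimately show ?thesis by metis
  qed
  have Pint: "(P N has_integral (\<Sum>n<N. (-s) ^ n / real (Suc n) ^ Suc n)) {0..1}" for N
    unfolding P_def by (intro has_integral_sum term_int) auto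
  have conv: "(\<lambda>N. P N x) \<longlonglongrightarrow> exp (s * (x * ln x))" for x
  proof -
    have "(\<lambda>n. (s * (x * ln x)) ^ n /\<^sub>R fact n) sums exp (s * (x * ln x))" by (rule exp_converges)
    then show ?thesis unfolding P_def sums_def by (simp add: divide_inverse_commute)
  qed
  have bound: "norm (P N x) \<le> exp \<bar>s\<bar>" if x: "x \<in> {0..1}" for N x
  proof -
    define y where "y = s * (x * ln x)"
    have "\<bar>x * ln x\<bar> \<le> 1" using xlnx_bounds[of x] x by auto
    then have y1: "\<bar>y\<bar> \<le> \<bar>s\<bar>" unfolding y_def abs_mult
      by (metis abs_ge_zero mult.right_neutral mult_left_mono)
    have "norm (P N x) \<le> (\<Sum>n<N. norm (y ^ n / fact n))" unfolding P_def y_def by (rule norm_sum)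
    also have "\<dots> = (\<Sum>n<N. \<bar>y\<bar> ^ n /\<^sub>R fact n)" by (simp add: power_abs divide_inverse_commute abs_mult)
    also have "\<dots> \<le> (\<Sum>n. \<bar>y\<bar> ^ n /\<^sub>R fact n)"
      by (intro sum_le_suminf summable_exp_generic) auto
    also have "\<dots> = exp \<bar>y\<bar>" by (simp add: exp_def)
    also have "\<dots> \<le> exp \<bar>s\<bar>" using y1 by simp
    finally show ?thesis .
  qed
  have "(\<lambda>N. integral {0..1} (P N)) \<longlonglongrightarrow> integral {0..1} (\<lambda>x. exp (s * (x * ln x)))"
    by (rule dominated_convergence(2)[where h = "\<lambda>_. exp \<bar>s\<bar>"])
       (use Pint bound conv in \<open>auto simp: integrable_on_def\<close>)
  moreover have "integral {0..1} (P N) = (\<Sum>n<N. (-s) ^ n / real (Suc n) ^ Suc n)" for N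
    using Pint by (rule integral_unique)
  ultimately show ?thesis unfolding sums_def by simp
qed


definition EE :: "real \<Rightarrow> real" where
  "EE s = integral {0..1} (\<lambda>x. exp (s * (x * ln x)))"

lemma EE_int: "((\<lambda>x. exp (s * (x * ln x))) has_integral EE s) {0..1}"
proof -
  have "continuous_on {0..1} (\<lambda>x::real. exp (s * (x * ln x)))"
    by (intro continuous_intros cont_xlnx)
  then show ?thesis unfolding EE_def
    by (intro integrable_integral integrable_continuous_interval)
qed

lemma exp_lin_int:
  fixes a b :: real assumes "a \<noteq> 0"
  shows "((\<lambda>x. exp (a * x + b)) has_integral (exp (a + b) - exp b) / a) {0..1}"
proof -
  have "((\<lambda>x. exp (a * x + b)) has_integral ((\<lambda>x. exp (a * x + b) / a) 1 - (\<lambda>x. exp (a * x + b) / a) 0)) {0..1}"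
  proof (intro fundamental_theorem_of_calculus_interior)
    show "continuous_on {0..1} (\<lambda>x. exp (a * x + b) / a)" using assms by (intro continuous_intros) auto
    fix x :: real
    have "((\<lambda>x. exp (a * x + b) / a) has_real_derivative exp (a * x + b)) (at x)"
      using assms by (auto intro!: derivative_eq_intros)
    then show "((\<lambda>x. exp (a * x + b) / a) has_vector_derivative exp (a * x + b)) (at x)"
      by (simp add: has_real_derivative_iff_has_vector_derivative)
  qed simp
  then show ?thesis by (simp add: diff_divide_distrib)
qed

lemma EE_lower:
  assumes s: "s > 0"
  shows "1 - exp (-s) \<le> s * EE s"
proof -
  have "(exp (s + - s) - exp (- s)) / s \<le> EE s"
  proof (rule has_integral_le[OF exp_lin_int EE_int])
    show "s \<noteq> 0" using s by simp
    fix x :: real assume x: "x \<in> {0..1}"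
    have "s * (x - 1) \<le> s * (x * ln x)" using xlnx_bounds[of x] x s by (intro mult_left_mono) auto
    then show "exp (s * x + - s) \<le> exp (s * (x * ln x))" by (simp add: algebra_simps)
  qed
  then show ?thesis using s by (simp add: field_simps)
qed

lemma EE_upper:
  assumes s: "s > 0" and d: "0 < d" "d \<le> c" and c: "c < 1"
  shows "s * EE s \<le> (1 - exp (s * ln d)) / (- ln d) + s * exp (s * d * ln c) + (1 - exp (- (s * c))) / c"
proof -
  have dc: "d < 1" "0 < c" using d c by auto
  have lnd: "ln d < 0" using dc d by simp
  have lnc: "ln c < 0" using dc c by simp
  have i1: "((\<lambda>x. exp ((s * ln d) * x + 0)) has_integral (exp (s * ln d + 0) - exp 0) / (s * ln d)) {0..1}"
    using s lnd by (intro exp_lin_int) simp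
  have i2: "((\<lambda>x::real. exp (s * d * ln c)) has_integral exp (s * d * ln c)) {0..1}"
    using has_integral_const_real[of "exp (s * d * ln c)" 0 1] by simp
  have i3: "((\<lambda>x. exp ((s * c) * x + - (s * c))) has_integral (exp (s * c + - (s * c)) - exp (- (s * c))) / (s * c)) {0..1}"
    using s dc by (intro exp_lin_int) simp
  have "EE s \<le> (exp (s * ln d + 0) - exp 0) / (s * ln d) + exp (s * d * ln c) + (exp (s * c + - (s * c)) - exp (- (s * c))) / (s * c)"
  proof (rule has_integral_le[OF EE_int has_integral_add[OF has_integral_add[OF i1 i2] i3]])
    fix x :: real assume x: "x \<in> {0..1}"
    have pos: "0 \<le> exp ((s * ln d) * x + 0)" "0 \<le> exp (s * d * ln c)" "0 \<le> exp ((s * c) * x + - (s * c))"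
      by auto
    consider "x \<le> d" | "d \<le> x" "x \<le> c" | "c \<le> x" by linarith
    then show "exp (s * (x * ln x)) \<le> exp ((s * ln d) * x + 0) + exp (s * d * ln c) + exp ((s * c) * x + - (s * c))"
    proof cases
      case 1
      have "x * ln x \<le> x * ln d"
      proof (cases "x = 0")
        case False
        then have "x > 0" using x by simp
        then show ?thesis using 1 by (intro mult_left_mono) auto
      qed simp
      then have "s * (x * ln x) \<le> (s * ln d) * x + 0" using s
        by (metis add.right_neutral mult.assoc mult.commute mult_le_cancel_left_pos)
      then show ?thesis using pos by (smt (verit) exp_le_cancel_iff)
    next
      case 2
      then have xp: "x > 0" using d by simp
      have "x * ln x \<le> x * ln c" using 2 xp by (intro mult_left_mono) auto
      also have "\<dots> \<le> d * ln c" using 2 lnc by (intro mult_right_mono_neg) auto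
      finally have "s * (x * ln x) \<le> s * d * ln c" using s
        by (metis mult.assoc mult_le_cancel_left_pos)
      then show ?thesis using pos by (smt (verit) exp_le_cancel_iff)
    next
      case 3
      then have xp: "x > 0" using dc by simp
      have lnx: "ln x \<le> 0" using x xp by simp
      have "x * ln x \<le> c * ln x" using 3 lnx by (intro mult_right_mono_neg) auto
      also have "\<dots> \<le> c * (x - 1)" using xp dc by (intro mult_left_mono ln_le_minus_one) auto
      finally have "s * (x * ln x) \<le> s * (c * (x - 1))" using s by (intro mult_left_mono) auto
      then have "s * (x * ln x) \<le> (s * c) * x + - (s * c)" by (simp add: algebra_simps)
      then show ?thesis using pos by (smt (verit) exp_le_cancel_iff)
    qed
  qed
  then have "s * EE s \<le> s * ((exp (s * ln d + 0) - exp 0) / (s * ln d) + exp (s * d * ln c) + (exp (s * c + - (s * c)) - exp (- (s * c))) / (s * c))"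
    using s by (intro mult_left_mono) auto
  also have "\<dots> = (1 - exp (s * ln d)) / (- ln d) + s * exp (s * d * ln c) + (1 - exp (- (s * c))) / c"
    using s dc lnd by (simp add: field_simps)
  finally show ?thesis .
qed


lemma sEE_lim: "((\<lambda>s. s * EE s) \<longlongrightarrow> 1) at_top"
proof (rule tendsto_sandwich)
  define U where "U s = (1 - exp (s * ln (s powr (-1/2)))) / (- ln (s powr (-1/2)))
     + s * exp (s * s powr (-1/2) * ln (1 - s powr (-1/4))) + (1 - exp (- (s * (1 - s powr (-1/4))))) / (1 - s powr (-1/4))" for s :: real
  have ev1: "eventually (\<lambda>s::real. s powr (-1/2) \<le> 1 - s powr (-1/4)) at_top" by real_asymp
  have ev2: "eventually (\<lambda>s::real. 1 - s powr (-1/4) < 1) at_top" by real_asymp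
  have ev3: "eventually (\<lambda>s::real. s > 0) at_top" by real_asymp
  show "eventually (\<lambda>s. s * EE s \<le> U s) at_top"
    using ev1 ev2 ev3
  proof eventually_elim
    case (elim s)
    then show ?case unfolding U_def by (intro EE_upper) auto
  qed
  show "eventually (\<lambda>s. 1 - exp (-s) \<le> s * EE s) at_top"
    using ev3 by eventually_elim (rule EE_lower)
  show "((\<lambda>s::real. 1 - exp (-s)) \<longlongrightarrow> 1) at_top" by real_asymp
  show "(U \<longlongrightarrow> 1) at_top" unfolding U_def by real_asymp
qed

theorem mainTheorem8:
  shows "(f_series \<longlongrightarrow> -1) at_bot"
proof -
  have fs: "f_series t = t * EE (- t)" for t
  proof -
    have "(\<lambda>n. (- (- t)) ^ n / real (Suc n) ^ Suc n) sums EE (- t)"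
      unfolding EE_def by (rule series_rep)
    then have "(\<lambda>n. t * (t ^ n / real (Suc n) ^ Suc n)) sums (t * EE (- t))"
      by (intro sums_mult) simp
    then show ?thesis unfolding f_series_def by (simp add: sums_iff)
  qed
  have "((\<lambda>x. - (x * EE x)) \<longlongrightarrow> -1) at_top"
    by (intro tendsto_minus sEE_lim)
  then show ?thesis
    unfolding filterlim_at_bot_mirror fs by simp
qed

end
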